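(* Let $\Omega$ be a compact metric space, $T:\Omega\to\Omega$ a homeomorphism, $\mathcal{H}$ a proper unique visibility Gromov hyperbolic space which is strongly hyperbolic of parameter $\varepsilon>0$ with respect to a base point $p\in\mathcal{H}$, and $A:\Omega\to\mathrm{Isom}(\mathcal{H})$ continuous for the topology of uniform convergence on bounded sets. Let $\alpha:\Omega\to\partial\mathcal{H}$ be a continuous section with $A^*(\omega)\cdot\alpha(\omega)=\alpha(T\omega)$ for all $\omega$, and define $\phi(\omega)=-b_{p,\alpha(T\omega)}(A(\omega)\cdot p)$. If $(T,A)$ is $\tau$-H\"older and $\alpha$ is $\tau$-H\"older with respect to the metric $\varrho_\varepsilon$ on $\partial\mathcal{H}$ (i.e. $\varrho_\varepsilon(\alpha(\omega_1),\alpha(\omega_2))\le C d_\Omega(\omega_1,\omega_2)^\tau$ for some $C$), then $\phi$ is $\tau$-H\"older.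
   Context: Gromov product: $(x,y)_p=\tfrac12\big(d_{\mathcal{H}}(x,p)+d_{\mathcal{H}}(y,p)-d_{\mathcal{H}}(x,y)\big)$ for $x,y\in\mathcal{H}$; $\varrho_\varepsilon(x,y)=e^{-\varepsilon(x,y)_p}$. $\mathcal{H}$ is strongly hyperbolic of parameter $\varepsilon$ if $\varrho_\varepsilon(x,y)\le\varrho_\varepsilon(x,z)+\varrho_\varepsilon(y,z)$ for all $x,y,z\in\mathcal{H}$. In that case the Gromov product extends continuously to $\mathcal{H}\cup\partial\mathcal{H}$ via $(x,y)_p=\lim_i(x_i,y_i)_p$ for $x_i\to x$, $y_i\to y$ (independent of the sequences), and $\varrho_\varepsilon(x,y)=e^{-\varepsilon(x,y)_p}$ is a metric on $\partial\mathcal{H}$. A proper unique geodesic space is Gromov hyperbolic if geodesic triangles are $\delta$-slim for some $\delta$; $\partial\mathcal{H}$ is the set of classes of geodesic rays at bounded distance; unique visibility means any two distinct boundary points are ends of a unique bi-infinite geodesic. An isometry $A$ induces $A^*[\gamma]=[A\circ\gamma]$ on $\partial\mathcal{H}$. Busemann function: $b_{p,\alpha}(h)=\lim_n\big(d_{\mathcal{H}}(x_n,h)-d_{\mathcal{H}}(x_n,p)\big)$ for $x_n\to\alpha$. Continuity of $A$ for uniform convergence on bounded sets: for every bounded $K$, $\omega_0$, $\eta>0$ there is $\delta>0$ with $d_{\mathcal{H}}(A(\omega)h,A(\omega_0)h)<\eta$ for $h\in K$ when $d_\Omega(\omega,\omega_0)<\delta$. $(T,A)$ is $\tau$-H\"older: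 for every bounded $K\subset\mathcal{H}$ there is $C_K$ with $d_{\mathcal{H}}(A(\omega_1)h,A(\omega_2)h)\le C_K d_\Omega(\omega_1,\omega_2)^\tau$ for $h\in K$. *)

theory Defs
  imports "HOL-Analysis.Analysis"
begin

definition gromov :: "'h::metric_space \<Rightarrow> 'h \<Rightarrow> 'h \<Rightarrow> real" where
  "gromov p x y = (dist x p + dist y p - dist x y) / 2"

definition strongly_hyperbolic :: "real \<Rightarrow> 'h::metric_space \<Rightarrow> bool" where
  "strongly_hyperbolic \<epsilon> p \<longleftrightarrow>
     (\<forall>x y z::'h. exp (- \<epsilon> * gromov p x y) \<le> exp (- \<epsilon> * gromov p x z) + exp (- \<epsilon> * gromov p y z))"

definition proper_space :: "'h::metric_space itself \<Rightarrow> bool" where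
  "proper_space _ \<longleftrightarrow> (\<forall>(x::'h) r. compact (cball x r))"

definition geodesic_seg :: "('h::metric_space) \<Rightarrow> 'h \<Rightarrow> (real \<Rightarrow> 'h) \<Rightarrow> bool" where
  "geodesic_seg x y \<gamma> \<longleftrightarrow> \<gamma> 0 = x \<and> \<gamma> (dist x y) = y \<and>
     (\<forall>s\<in>{0..dist x y}. \<forall>t\<in>{0..dist x y}. dist (\<gamma> s) (\<gamma> t) = \<bar>s - t\<bar>)"

definition unique_geodesic_space :: "'h::metric_space itself \<Rightarrow> bool" where
  "unique_geodesic_space _ \<longleftrightarrow>
     (\<forall>x y::'h. (\<exists>\<gamma>. geodesic_seg x y \<gamma>) \<and>
        (\<forall>\<gamma> \<gamma>'. geodesic_seg x y \<gamma> \<longrightarrow> geodesic_seg x y \<gamma>' \<longrightarrow> (\<forall>t\<in>{0..dist x y}. \<gamma> t = \<gamma>' t)))"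

definition geoseg :: "'h::metric_space \<Rightarrow> 'h \<Rightarrow> 'h set" where
  "geoseg x y = (\<Union>\<gamma>\<in>{\<gamma>. geodesic_seg x y \<gamma>}. \<gamma> ` {0..dist x y})"

definition gromov_hyperbolic :: "'h::metric_space itself \<Rightarrow> bool" where
  "gromov_hyperbolic _ \<longleftrightarrow> (\<exists>\<delta>. \<forall>x y z::'h. \<forall>a\<in>geoseg x y. infdist a (geoseg y z \<union> geoseg x z) \<le> \<delta>)"

definition geodesic_ray :: "(real \<Rightarrow> 'h::metric_space) \<Rightarrow> bool" where
  "geodesic_ray \<gamma> \<longleftrightarrow> (\<forall>s\<ge>0. \<forall>t\<ge>0. dist (\<gamma> s) (\<gamma> t) = \<bar>s - t\<bar>)"

definition ray_class :: "(real \<Rightarrow> 'h::metric_space) \<Rightarrow> (real \<Rightarrow> 'h) set" where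
  "ray_class \<gamma> = {\<gamma>'. geodesic_ray \<gamma>' \<and> (\<exists>C. \<forall>t\<ge>0. dist (\<gamma> t) (\<gamma>' t) \<le> C)}"

definition gromov_boundary :: "(real \<Rightarrow> 'h::metric_space) set set" where
  "gromov_boundary = {ray_class \<gamma> |\<gamma>. geodesic_ray \<gamma>}"

definition bi_geodesic :: "(real \<Rightarrow> 'h::metric_space) \<Rightarrow> bool" where
  "bi_geodesic c \<longleftrightarrow> (\<forall>s t. dist (c s) (c t) = \<bar>s - t\<bar>)"

definition joins :: "(real \<Rightarrow> 'h::metric_space) \<Rightarrow> (real \<Rightarrow> 'h) set \<Rightarrow> (real \<Rightarrow> 'h) set \<Rightarrow> bool" where
  "joins c \<eta> \<xi> \<longleftrightarrow> bi_geodesic c \<and> c \<in> \<xi> \<and> (\<lambda>t. c (- t)) \<in> \<eta>"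

definition unique_visibility :: "'h::metric_space itself \<Rightarrow> bool" where
  "unique_visibility _ \<longleftrightarrow>
     (\<forall>\<xi>\<in>(gromov_boundary :: (real \<Rightarrow> 'h) set set). \<forall>\<eta>\<in>gromov_boundary. \<xi> \<noteq> \<eta> \<longrightarrow>
        (\<exists>c. joins c \<eta> \<xi>) \<and> (\<forall>c c'. joins c \<eta> \<xi> \<longrightarrow> joins c' \<eta> \<xi> \<longrightarrow> range c = range c'))"

definition conv_bd :: "'h::metric_space \<Rightarrow> (nat \<Rightarrow> 'h) \<Rightarrow> (real \<Rightarrow> 'h) set \<Rightarrow> bool" where
  "conv_bd p xs \<xi> \<longleftrightarrow> (\<exists>\<gamma>\<in>\<xi>. \<forall>M. \<exists>N T. \<forall>n\<ge>N. \<forall>t\<ge>T. gromov p (xs n) (\<gamma> t) \<ge> M)"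

definition bd_gromov :: "'h::metric_space \<Rightarrow> (real \<Rightarrow> 'h) set \<Rightarrow> (real \<Rightarrow> 'h) set \<Rightarrow> ereal" where
  "bd_gromov p \<xi> \<eta> =
     (let xs = (SOME xs. conv_bd p xs \<xi>); ys = (SOME ys. conv_bd p ys \<eta>)
      in lim (\<lambda>i. ereal (gromov p (xs i) (ys i))))"

definition rho :: "real \<Rightarrow> 'h::metric_space \<Rightarrow> (real \<Rightarrow> 'h) set \<Rightarrow> (real \<Rightarrow> 'h) set \<Rightarrow> real" where
  "rho \<epsilon> p \<xi> \<eta> = (if bd_gromov p \<xi> \<eta> = \<infinity> then 0 else exp (- \<epsilon> * real_of_ereal (bd_gromov p \<xi> \<eta>)))"

definition busemann :: "'h::metric_space \<Rightarrow> (real \<Rightarrow> 'h) set \<Rightarrow> 'h \<Rightarrow> real" where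
  "busemann p \<xi> h = (let xs = (SOME xs. conv_bd p xs \<xi>) in lim (\<lambda>n. dist (xs n) h - dist (xs n) p))"

definition isometry :: "('h::metric_space \<Rightarrow> 'h) \<Rightarrow> bool" where
  "isometry g \<longleftrightarrow> bij g \<and> (\<forall>x y. dist (g x) (g y) = dist x y)"

definition bd_act :: "('h::metric_space \<Rightarrow> 'h) \<Rightarrow> (real \<Rightarrow> 'h) set \<Rightarrow> (real \<Rightarrow> 'h) set" where
  "bd_act g \<xi> = ray_class (g \<circ> (SOME \<gamma>. \<gamma> \<in> \<xi>))"

end

theory Submission
  imports Defs
begin

definition rh :: "real \<Rightarrow> 'h::metric_space \<Rightarrow> 'h \<Rightarrow> 'h \<Rightarrow> real" where
  "rh \<epsilon> p x y = exp (- \<epsilon> * gromov p x y)"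

lemma gromov_sym: "gromov p x y = gromov p y x"
  unfolding gromov_def by (simp add: dist_commute)

lemma gromov_nonneg: "0 \<le> gromov p x y"
  unfolding gromov_def using dist_triangle[of x y p] by (simp add: dist_commute)

lemma gromov_le: "gromov p x h \<le> dist h p"
  unfolding gromov_def using dist_triangle[of x p h] by (simp add: dist_commute)

lemma gromov_lip: "\<bar>gromov p x q1 - gromov p x q2\<bar> \<le> dist q1 q2"
proof -
  have a: "dist x q1 \<le> dist x q2 + dist q1 q2" "dist x q2 \<le> dist x q1 + dist q1 q2"
    "dist q1 p \<le> dist q1 q2 + dist q2 p" "dist q2 p \<le> dist q1 q2 + dist q1 p"
    using dist_triangle[of x q1 q2] dist_triangle[of x q2 q1]
    dist_triangle[of q1 p q2] dist_triangle[of q2 p q1] dist_commute[of q2 q1] by auto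
  show ?thesis unfolding gromov_def abs_le_iff using a by (simp add: field_simps)
qed

lemma rh_sym: "rh \<epsilon> p x y = rh \<epsilon> p y x"
  unfolding rh_def by (simp add: gromov_sym)

lemma rh_tri: "strongly_hyperbolic \<epsilon> p \<Longrightarrow> rh \<epsilon> p x y \<le> rh \<epsilon> p x z + rh \<epsilon> p y z"
  unfolding rh_def strongly_hyperbolic_def by blast

lemma rh_abs: "strongly_hyperbolic \<epsilon> p \<Longrightarrow> \<bar>rh \<epsilon> p x h - rh \<epsilon> p y h\<bar> \<le> rh \<epsilon> p x y"
  using rh_tri[of \<epsilon> p x h y] rh_tri[of \<epsilon> p y h x] rh_sym[of \<epsilon> p x y] rh_sym[of \<epsilon> p h y]
    rh_sym[of \<epsilon> p h x]
  by (simp add: abs_le_iff)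

lemma rh_le: "\<epsilon> > 0 \<Longrightarrow> gromov p x y \<ge> M \<Longrightarrow> rh \<epsilon> p x y \<le> exp (- \<epsilon> * M)"
  unfolding rh_def by simp

lemma rh_ge: "\<epsilon> > 0 \<Longrightarrow> rh \<epsilon> p x h \<ge> exp (- \<epsilon> * dist h p)"
  unfolding rh_def using gromov_le[of p x h] by simp

lemma rh_pos: "rh \<epsilon> p x h > 0" unfolding rh_def by simp

lemma gromov_rh: "\<epsilon> > 0 \<Longrightarrow> gromov p x y = - ln (rh \<epsilon> p x y) / \<epsilon>"
  unfolding rh_def by simp

definition cauchy_rh :: "real \<Rightarrow> 'h::metric_space \<Rightarrow> (nat \<Rightarrow> 'h) \<Rightarrow> bool" where
  "cauchy_rh \<epsilon> p xs \<longleftrightarrow> (\<forall>e>0. \<exists>N. \<forall>n\<ge>N. \<forall>m\<ge>N. rh \<epsilon> p (xs n) (xs m) < e)"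

lemma conv_bd_cauchy:
  assumes eps: "\<epsilon> > 0" and st: "strongly_hyperbolic \<epsilon> p" and cb: "conv_bd p xs \<xi>"
  shows "cauchy_rh \<epsilon> p xs"
  unfolding cauchy_rh_def
proof (intro allI impI)
  fix e :: real assume e: "e > 0"
  define M where "M = - ln (e/3) / \<epsilon>"
  have eM: "exp (- \<epsilon> * M) = e/3" unfolding M_def using eps e by simp
  from cb obtain \<gamma> where "\<forall>M. \<exists>N T. \<forall>n\<ge>N. \<forall>t::real\<ge>T. gromov p (xs n) (\<gamma> t) \<ge> M"
    unfolding conv_bd_def by blast
  then obtain N T where NT: "\<forall>n\<ge>N. \<forall>t::real\<ge>T. gromov p (xs n) (\<gamma> t) \<ge> M" by blast
  show "\<exists>N. \<forall>n\<ge>N. \<forall>m\<ge>N. rh \<epsilon> p (xs n) (xs m) < e"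
  proof (intro exI allI impI)
    fix n m assume "n \<ge> N" "m \<ge> N"
    then have "rh \<epsilon> p (xs n) (\<gamma> T) \<le> e/3" "rh \<epsilon> p (xs m) (\<gamma> T) \<le> e/3"
      using NT rh_le[OF eps] eM by (metis order_refl)+
    then show "rh \<epsilon> p (xs n) (xs m) < e" using rh_tri[OF st, of "xs n" "xs m" "\<gamma> T"] e by linarith
  qed
qed

definition G :: "'h::metric_space \<Rightarrow> (nat \<Rightarrow> 'h) \<Rightarrow> 'h \<Rightarrow> real" where
  "G p xs h = lim (\<lambda>n. gromov p (xs n) h)"

lemma G_tendsto:
  assumes eps: "\<epsilon> > 0" and st: "strongly_hyperbolic \<epsilon> p" and c: "cauchy_rh \<epsilon> p xs"
  shows "(\<lambda>n. gromov p (xs n) h) \<longlonglongrightarrow> G p xs h"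
proof -
  define f where "f n = rh \<epsilon> p (xs n) h" for n
  have "Cauchy f" unfolding Cauchy_def
  proof (intro allI impI)
    fix e :: real assume "e > 0"
    then obtain N where N: "\<forall>n\<ge>N. \<forall>m\<ge>N. rh \<epsilon> p (xs n) (xs m) < e" using c unfolding cauchy_rh_def by blast
    show "\<exists>M. \<forall>m\<ge>M. \<forall>n\<ge>M. dist (f m) (f n) < e"
      using N rh_abs[OF st] unfolding f_def dist_real_def by (meson order_le_less_trans)
  qed
  then obtain L where L: "f \<longlonglongrightarrow> L" using Cauchy_convergent convergent_def by blast
  have "L \<ge> exp (- \<epsilon> * dist h p)"
    using LIMSEQ_le_const[OF L, of "exp (- \<epsilon> * dist h p)"] rh_ge[OF eps] unfolding f_def by blast
  then have "L > 0" by (smt (verit) exp_gt_zero)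
  then have "(\<lambda>n. - ln (f n) / \<epsilon>) \<longlonglongrightarrow> - ln L / \<epsilon>"
    using eps by (intro tendsto_intros L) auto
  then have "(\<lambda>n. gromov p (xs n) h) \<longlonglongrightarrow> - ln L / \<epsilon>"
    unfolding f_def by (subst (asm) gromov_rh[OF eps, symmetric]) 
  then show ?thesis unfolding G_def using limI by (metis)
qed

lemma rh_G_tendsto:
  assumes eps: "\<epsilon> > 0" and st: "strongly_hyperbolic \<epsilon> p" and c: "cauchy_rh \<epsilon> p xs"
  shows "(\<lambda>n. rh \<epsilon> p (xs n) h) \<longlonglongrightarrow> exp (- \<epsilon> * G p xs h)"
  unfolding rh_def by (intro tendsto_intros G_tendsto[OF eps st c])

lemma G_bounds:
  assumes eps: "\<epsilon> > 0" and st: "strongly_hyperbolic \<epsilon> p" and c: "cauchy_rh \<epsilon> p xs"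
  shows "0 \<le> G p xs h" "G p xs h \<le> dist h p"
  by (rule LIMSEQ_le_const[OF G_tendsto[OF eps st c]], auto intro: gromov_nonneg)
     (rule LIMSEQ_le_const2[OF G_tendsto[OF eps st c]], auto intro: gromov_le)

lemma G_lip:
  assumes eps: "\<epsilon> > 0" and st: "strongly_hyperbolic \<epsilon> p" and c: "cauchy_rh \<epsilon> p xs"
  shows "\<bar>G p xs q1 - G p xs q2\<bar> \<le> dist q1 q2"
proof -
  have "(\<lambda>n. \<bar>gromov p (xs n) q1 - gromov p (xs n) q2\<bar>) \<longlonglongrightarrow> \<bar>G p xs q1 - G p xs q2\<bar>"
    by (intro tendsto_intros G_tendsto[OF eps st c])
  then show ?thesis by (rule LIMSEQ_le_const2) (auto intro: gromov_lip)
qed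

lemma G_exp_bound:
  assumes eps: "\<epsilon> > 0" and st: "strongly_hyperbolic \<epsilon> p" and c1: "cauchy_rh \<epsilon> p xs"
    and c2: "cauchy_rh \<epsilon> p ys" and R: "(\<lambda>n. rh \<epsilon> p (xs n) (ys n)) \<longlonglongrightarrow> R"
  shows "\<bar>exp (- \<epsilon> * G p xs h) - exp (- \<epsilon> * G p ys h)\<bar> \<le> R"
proof -
  have "(\<lambda>n. \<bar>rh \<epsilon> p (xs n) h - rh \<epsilon> p (ys n) h\<bar>) \<longlonglongrightarrow> \<bar>exp (- \<epsilon> * G p xs h) - exp (- \<epsilon> * G p ys h)\<bar>"
    by (intro tendsto_intros rh_G_tendsto[OF eps st c1] rh_G_tendsto[OF eps st c2])
  then show ?thesis by (rule LIMSEQ_le[OF _ R]) (auto intro: rh_abs[OF st])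
qed

lemma G_equiv:
  assumes eps: "\<epsilon> > 0" and st: "strongly_hyperbolic \<epsilon> p" and c1: "cauchy_rh \<epsilon> p xs"
    and c2: "cauchy_rh \<epsilon> p ys" and R: "(\<lambda>n. rh \<epsilon> p (xs n) (ys n)) \<longlonglongrightarrow> 0"
  shows "G p xs h = G p ys h"
proof -
  have "\<bar>exp (- \<epsilon> * G p xs h) - exp (- \<epsilon> * G p ys h)\<bar> \<le> 0" by (rule G_exp_bound[OF eps st c1 c2 R])
  then have "exp (- \<epsilon> * G p xs h) = exp (- \<epsilon> * G p ys h)" by simp
  then show ?thesis using eps by simp
qed

definition sq :: "'h::metric_space \<Rightarrow> (real \<Rightarrow> 'h) set \<Rightarrow> nat \<Rightarrow> 'h" where
  "sq p \<xi> = (SOME xs. conv_bd p xs \<xi>)"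

lemma rho_lim:
  assumes eps: "\<epsilon> > 0" and st: "strongly_hyperbolic \<epsilon> p"
    and cx: "cauchy_rh \<epsilon> p (sq p \<xi>)" and cy: "cauchy_rh \<epsilon> p (sq p \<eta>)"
  shows "(\<lambda>n. rh \<epsilon> p (sq p \<xi> n) (sq p \<eta> n)) \<longlonglongrightarrow> rho \<epsilon> p \<xi> \<eta>"
proof -
  define xs where "xs = sq p \<xi>"
  define ys where "ys = sq p \<eta>"
  define f where "f n = rh \<epsilon> p (xs n) (ys n)" for n
  have bd: "bd_gromov p \<xi> \<eta> = lim (\<lambda>i. ereal (gromov p (xs i) (ys i)))"
    unfolding bd_gromov_def xs_def ys_def sq_def Let_def ..
  have "Cauchy f" unfolding Cauchy_def
  proof (intro allI impI)
    fix e :: real assume "e > 0"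
    then have "e/2 > 0" by simp
    then obtain N1 where N1: "\<forall>n\<ge>N1. \<forall>m\<ge>N1. rh \<epsilon> p (xs n) (xs m) < e/2"
      using cx unfolding cauchy_rh_def xs_def by blast
    obtain N2 where N2: "\<forall>n\<ge>N2. \<forall>m\<ge>N2. rh \<epsilon> p (ys n) (ys m) < e/2"
      using cy \<open>e/2 > 0\<close> unfolding cauchy_rh_def ys_def by blast
    show "\<exists>M. \<forall>m\<ge>M. \<forall>n\<ge>M. dist (f m) (f n) < e"
    proof (intro exI allI impI)
      fix m n assume mn: "max N1 N2 \<le> m" "max N1 N2 \<le> n"
      have a: "\<bar>rh \<epsilon> p (xs m) (ys m) - rh \<epsilon> p (xs n) (ys m)\<bar> \<le> rh \<epsilon> p (xs m) (xs n)"
        by (rule rh_abs[OF st])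
      have b: "\<bar>rh \<epsilon> p (ys m) (xs n) - rh \<epsilon> p (ys n) (xs n)\<bar> \<le> rh \<epsilon> p (ys m) (ys n)"
        by (rule rh_abs[OF st])
      have c: "rh \<epsilon> p (xs m) (xs n) < e/2" "rh \<epsilon> p (ys m) (ys n) < e/2" using N1 N2 mn by auto
      show "dist (f m) (f n) < e" unfolding f_def dist_real_def
        using a b c rh_sym[of \<epsilon> p "ys m" "xs n"] rh_sym[of \<epsilon> p "ys n" "xs n"] by linarith
    qed
  qed
  then obtain R where R: "f \<longlonglongrightarrow> R" using Cauchy_convergent convergent_def by blast
  have "R \<ge> 0" using LIMSEQ_le_const[OF R, of 0] rh_pos[THEN less_imp_le] unfolding f_def by blast
  have gf: "gromov p (xs i) (ys i) = - ln (f i) / \<epsilon>" for i unfolding f_def by (rule gromov_rh[OF eps])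
  show ?thesis
  proof (cases "R > 0")
    case True
    have "(\<lambda>i. - ln (f i) / \<epsilon>) \<longlonglongrightarrow> - ln R / \<epsilon>"
      using eps True by (intro tendsto_intros R) auto
    then have "(\<lambda>i. ereal (gromov p (xs i) (ys i))) \<longlonglongrightarrow> ereal (- ln R / \<epsilon>)"
      unfolding gf by (rule tendsto_ereal)
    then have "bd_gromov p \<xi> \<eta> = ereal (- ln R / \<epsilon>)" unfolding bd by (rule limI)
    then have "rho \<epsilon> p \<xi> \<eta> = R" unfolding rho_def using eps True by simp
    then show ?thesis using R unfolding f_def xs_def ys_def by simp
  next
    case False
    then have R0: "R = 0" using \<open>R \<ge> 0\<close> by simp
    have "(\<lambda>i. ereal (gromov p (xs i) (ys i))) \<longlonglongrightarrow> \<infinity>"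
      unfolding tendsto_PInfty
    proof
      fix r :: real
      have "eventually (\<lambda>i. f i < exp (- \<epsilon> * r)) sequentially"
        using order_tendstoD(2)[OF R, of "exp (- \<epsilon> * r)"] R0 by simp
      then show "eventually (\<lambda>i. ereal r < ereal (gromov p (xs i) (ys i))) sequentially"
      proof (rule eventually_mono)
        fix i assume "f i < exp (- \<epsilon> * r)"
        then have "exp (- \<epsilon> * gromov p (xs i) (ys i)) < exp (- \<epsilon> * r)" unfolding f_def rh_def .
        then have "- \<epsilon> * gromov p (xs i) (ys i) < - \<epsilon> * r" by simp
        then show "ereal r < ereal (gromov p (xs i) (ys i))" using eps by simp
      qed
    qed
    then have "bd_gromov p \<xi> \<eta> = \<infinity>" unfolding bd by (rule limI)
    then have "rho \<epsilon> p \<xi> \<eta> = 0" unfolding rho_def by simp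
    then show ?thesis using R R0 unfolding f_def xs_def ys_def by simp
  qed
qed

lemma boundary_conv:
  assumes "\<xi> \<in> gromov_boundary"
  shows "\<exists>xs. conv_bd p xs \<xi>"
proof -
  obtain \<gamma> where \<xi>: "\<xi> = ray_class \<gamma>" and r: "geodesic_ray \<gamma>"
    using assms unfolding gromov_boundary_def by blast
  have mem: "\<gamma> \<in> \<xi>" unfolding \<xi> ray_class_def using r by auto
  define d0 where "d0 = dist (\<gamma> 0) p"
  have key: "gromov p (\<gamma> s) (\<gamma> t) \<ge> min s t - d0" if "s \<ge> 0" "t \<ge> 0" for s t
  proof -
    have "dist (\<gamma> s) (\<gamma> 0) = s" "dist (\<gamma> t) (\<gamma> 0) = t" "dist (\<gamma> s) (\<gamma> t) = \<bar>s - t\<bar>"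
      using r that unfolding geodesic_ray_def by auto
    moreover have "dist (\<gamma> s) (\<gamma> 0) \<le> dist (\<gamma> s) p + d0" "dist (\<gamma> t) (\<gamma> 0) \<le> dist (\<gamma> t) p + d0"
      unfolding d0_def by (metis dist_commute dist_triangle)+
    ultimately show ?thesis unfolding gromov_def by (auto simp: min_def abs_if split: if_splits)
  qed
  have "conv_bd p (\<lambda>n. \<gamma> (real n)) \<xi>"
    unfolding conv_bd_def
  proof (intro bexI[OF _ mem] allI)
    fix M
    show "\<exists>N T. \<forall>n\<ge>N. \<forall>t\<ge>T. M \<le> gromov p (\<gamma> (real n)) (\<gamma> t)"
    proof (intro exI allI impI)
      fix n t assume n: "nat \<lceil>M + d0\<rceil> \<le> n" and t: "max 0 (M + d0) \<le> t"
      have "real n \<ge> M + d0" using n by linarith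
      then have "min (real n) t - d0 \<ge> M" using t by auto
      then show "M \<le> gromov p (\<gamma> (real n)) (\<gamma> t)" using key[of "real n" t] t by auto
    qed
  qed
  then show ?thesis by blast
qed

lemma sq_conv: "\<xi> \<in> gromov_boundary \<Longrightarrow> conv_bd p (sq p \<xi>) \<xi>"
  unfolding sq_def using boundary_conv by (rule someI_ex) 

lemma busemann_G:
  assumes eps: "\<epsilon> > 0" and st: "strongly_hyperbolic \<epsilon> p" and c: "cauchy_rh \<epsilon> p (sq p \<xi>)"
  shows "busemann p \<xi> h = dist h p - 2 * G p (sq p \<xi>) h"
proof -
  have "(\<lambda>n. dist h p - 2 * gromov p (sq p \<xi> n) h) \<longlonglongrightarrow> dist h p - 2 * G p (sq p \<xi>) h"
    by (intro tendsto_intros G_tendsto[OF eps st c])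
  moreover have "dist h p - 2 * gromov p (sq p \<xi> n) h = dist (sq p \<xi> n) h - dist (sq p \<xi> n) p" for n
    unfolding gromov_def by (simp add: dist_commute field_simps)
  ultimately have "(\<lambda>n. dist (sq p \<xi> n) h - dist (sq p \<xi> n) p) \<longlonglongrightarrow> dist h p - 2 * G p (sq p \<xi>) h"
    by simp
  then show ?thesis unfolding busemann_def Let_def sq_def[symmetric] by (rule limI)
qed

lemma gromov_iso:
  assumes "\<forall>x y. dist (g x) (g y) = dist x y"
  shows "gromov p (g x) (g y) \<ge> gromov p x y - dist (g p) p"
proof -
  have "dist (g x) (g p) \<le> dist (g x) p + dist (g p) p" "dist (g y) (g p) \<le> dist (g y) p + dist (g p) p"
    by (metis dist_commute dist_triangle)+
  then show ?thesis using assms unfolding gromov_def by (simp add: field_simps)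
qed

lemma gromov_close: "dist a b \<le> C \<Longrightarrow> gromov p a b \<ge> dist a p - C"
  unfolding gromov_def using dist_triangle[of a p b] by (simp add: dist_commute field_simps)

lemma rays_equiv:
  assumes eps: "\<epsilon> > 0" and st: "strongly_hyperbolic \<epsilon> p"
    and hx: "\<forall>M. \<exists>N T. \<forall>n\<ge>N. \<forall>t::real\<ge>T. gromov p (xs n) (\<gamma>1 t) \<ge> M"
    and hy: "\<forall>M. \<exists>N T. \<forall>n\<ge>N. \<forall>t::real\<ge>T. gromov p (ys n) (\<gamma>2 t) \<ge> M"
    and ray2: "geodesic_ray \<gamma>2"
    and close: "\<forall>t\<ge>0. dist (g (\<gamma>1 t)) (\<gamma>2 t) \<le> C"
    and giso: "\<forall>x y. dist (g x) (g y) = dist x y"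
  shows "(\<lambda>n. rh \<epsilon> p (ys n) (g (xs n))) \<longlonglongrightarrow> 0"
proof (rule LIMSEQ_I)
  fix e :: real assume e: "e > 0"
  define M where "M = - ln (e/4) / \<epsilon>"
  have eM: "exp (- \<epsilon> * M) = e/4" unfolding M_def using eps e by simp
  obtain N1 T1 where NT1: "\<forall>n\<ge>N1. \<forall>t::real\<ge>T1. gromov p (xs n) (\<gamma>1 t) \<ge> M + dist (g p) p"
    using hx by blast
  obtain N2 T2 where NT2: "\<forall>n\<ge>N2. \<forall>t::real\<ge>T2. gromov p (ys n) (\<gamma>2 t) \<ge> M"
    using hy by blast
  define t where "t = max (max T1 T2) (max 0 (M + C + dist (\<gamma>2 0) p))"
  show "\<exists>N. \<forall>n\<ge>N. norm (rh \<epsilon> p (ys n) (g (xs n)) - 0) < e"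
  proof (intro exI allI impI)
    fix n assume n: "max N1 N2 \<le> n"
    have a: "rh \<epsilon> p (ys n) (\<gamma>2 t) \<le> e/4"
      using NT2 n rh_le[OF eps] eM unfolding t_def by (metis max.bounded_iff max.cobounded1)
    have "gromov p (xs n) (\<gamma>1 t) \<ge> M + dist (g p) p"
      using NT1 n unfolding t_def by (metis max.bounded_iff max.cobounded1)
    then have "gromov p (g (xs n)) (g (\<gamma>1 t)) \<ge> M" using gromov_iso[OF giso, of p "xs n" "\<gamma>1 t"] by linarith
    then have b: "rh \<epsilon> p (g (xs n)) (g (\<gamma>1 t)) \<le> e/4" using rh_le[OF eps] eM by metis
    have t0: "t \<ge> 0" "t \<ge> M + C + dist (\<gamma>2 0) p" unfolding t_def by auto
    have "dist (\<gamma>2 t) (\<gamma>2 0) = t" using ray2 t0 unfolding geodesic_ray_def by auto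
    moreover have "dist (\<gamma>2 t) (\<gamma>2 0) \<le> dist (\<gamma>2 t) p + dist (\<gamma>2 0) p"
      by (metis dist_commute dist_triangle)
    moreover have "gromov p (\<gamma>2 t) (g (\<gamma>1 t)) \<ge> dist (\<gamma>2 t) p - C"
      using close t0 by (intro gromov_close) (simp add: dist_commute)
    ultimately have "gromov p (\<gamma>2 t) (g (\<gamma>1 t)) \<ge> M" using t0 by linarith
    then have c: "rh \<epsilon> p (\<gamma>2 t) (g (\<gamma>1 t)) \<le> e/4" using rh_le[OF eps] eM by metis
    have "rh \<epsilon> p (ys n) (g (xs n)) \<le> rh \<epsilon> p (ys n) (\<gamma>2 t) + rh \<epsilon> p (g (xs n)) (\<gamma>2 t)"
      by (rule rh_tri[OF st])
    moreover have "rh \<epsilon> p (g (xs n)) (\<gamma>2 t) \<le> rh \<epsilon> p (g (xs n)) (g (\<gamma>1 t)) + rh \<epsilon> p (\<gamma>2 t) (g (\<gamma>1 t))"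
      by (rule rh_tri[OF st])
    ultimately show "norm (rh \<epsilon> p (ys n) (g (xs n)) - 0) < e"
      using a b c e rh_pos[of \<epsilon> p "ys n" "g (xs n)"] by simp
  qed
qed

lemma cauchy_iso:
  assumes eps: "\<epsilon> > 0" and giso: "\<forall>x y. dist (g x) (g y) = dist x y" and c: "cauchy_rh \<epsilon> p xs"
  shows "cauchy_rh \<epsilon> p (\<lambda>n. g (xs n))"
  unfolding cauchy_rh_def
proof (intro allI impI)
  fix e :: real assume e: "e > 0"
  define k where "k = exp (\<epsilon> * dist (g p) p)"
  have k: "k > 0" unfolding k_def by simp
  have bnd: "rh \<epsilon> p (g x) (g y) \<le> k * rh \<epsilon> p x y" for x y
  proof -
    have "- \<epsilon> * gromov p (g x) (g y) \<le> \<epsilon> * dist (g p) p + - \<epsilon> * gromov p x y"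
      using mult_left_mono[OF gromov_iso[OF giso, of p x y], of \<epsilon>] eps by (simp add: algebra_simps)
    then show ?thesis unfolding rh_def k_def by (simp add: exp_add[symmetric])
  qed
  obtain N where N: "\<forall>n\<ge>N. \<forall>m\<ge>N. rh \<epsilon> p (xs n) (xs m) < e / k"
    using c e k unfolding cauchy_rh_def by (meson divide_pos_pos)
  show "\<exists>N. \<forall>n\<ge>N. \<forall>m\<ge>N. rh \<epsilon> p (g (xs n)) (g (xs m)) < e"
  proof (intro exI allI impI)
    fix n m assume "n \<ge> N" "m \<ge> N"
    then have "rh \<epsilon> p (xs n) (xs m) < e / k" using N by auto
    then have "k * rh \<epsilon> p (xs n) (xs m) < e" using k by (simp add: field_simps)
    then show "rh \<epsilon> p (g (xs n)) (g (xs m)) < e" using bnd[of "xs n" "xs m"] by linarith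
  qed
qed

lemma phi_formula:
  assumes eps: "\<epsilon> > 0" and st: "strongly_hyperbolic \<epsilon> p" and iso: "isometry g"
    and b1: "\<xi> \<in> gromov_boundary" and b2: "\<xi>' \<in> gromov_boundary" and eq: "bd_act g \<xi> = \<xi>'"
  shows "- busemann p \<xi>' (g p) = dist p (inv g p) - 2 * G p (sq p \<xi>) (inv g p)"
proof -
  define q where "q = inv g p"
  have giso: "\<forall>x y. dist (g x) (g y) = dist x y" using iso unfolding isometry_def by blast
  have gq: "g q = p" unfolding q_def using iso unfolding isometry_def by (simp add: bij_is_surj surj_f_inv_f)
  define xs where "xs = sq p \<xi>"
  define ys where "ys = sq p \<xi>'"
  have cbx: "conv_bd p xs \<xi>" unfolding xs_def by (rule sq_conv[OF b1])
  have cby: "conv_bd p ys \<xi>'" unfolding ys_def by (rule sq_conv[OF b2])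
  have cx: "cauchy_rh \<epsilon> p xs" by (rule conv_bd_cauchy[OF eps st cbx])
  have cy: "cauchy_rh \<epsilon> p ys" by (rule conv_bd_cauchy[OF eps st cby])
  have cgx: "cauchy_rh \<epsilon> p (\<lambda>n. g (xs n))" by (rule cauchy_iso[OF eps giso cx])
  obtain \<gamma>' where \<xi>: "\<xi> = ray_class \<gamma>'" and r': "geodesic_ray \<gamma>'"
    using b1 unfolding gromov_boundary_def by blast
  have "\<gamma>' \<in> \<xi>" unfolding \<xi> ray_class_def using r' by auto
  define \<gamma>0 where "\<gamma>0 = (SOME \<gamma>. \<gamma> \<in> \<xi>)"
  have "\<gamma>0 \<in> \<xi>" unfolding \<gamma>0_def using \<open>\<gamma>' \<in> \<xi>\<close> by (rule someI[of "\<lambda>\<gamma>. \<gamma> \<in> \<xi>"])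
  then obtain C0 where C0: "\<forall>t\<ge>0. dist (\<gamma>' t) (\<gamma>0 t) \<le> C0" unfolding \<xi> ray_class_def by blast
  have \<xi>': "\<xi>' = ray_class (g \<circ> \<gamma>0)" using eq unfolding bd_act_def \<gamma>0_def by simp
  obtain \<gamma>1 where "\<gamma>1 \<in> \<xi>" and hx: "\<forall>M. \<exists>N T. \<forall>n\<ge>N. \<forall>t::real\<ge>T. gromov p (xs n) (\<gamma>1 t) \<ge> M"
    using cbx unfolding conv_bd_def by blast
  then obtain C1 where C1: "\<forall>t\<ge>0. dist (\<gamma>' t) (\<gamma>1 t) \<le> C1" unfolding \<xi> ray_class_def by blast
  obtain \<gamma>2 where "\<gamma>2 \<in> \<xi>'" and hy: "\<forall>M. \<exists>N T. \<forall>n\<ge>N. \<forall>t::real\<ge>T. gromov p (ys n) (\<gamma>2 t) \<ge> M"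
    using cby unfolding conv_bd_def by blast
  then obtain C2 where C2: "\<forall>t\<ge>0. dist ((g \<circ> \<gamma>0) t) (\<gamma>2 t) \<le> C2" and r2: "geodesic_ray \<gamma>2"
    unfolding \<xi>' ray_class_def by blast
  have close: "\<forall>t\<ge>0. dist (g (\<gamma>1 t)) (\<gamma>2 t) \<le> C1 + C0 + C2"
  proof (intro allI impI)
    fix t :: real assume t: "t \<ge> 0"
    have "dist (g (\<gamma>1 t)) (\<gamma>2 t) \<le> dist (g (\<gamma>1 t)) (g (\<gamma>0 t)) + dist (g (\<gamma>0 t)) (\<gamma>2 t)"
      by (rule dist_triangle)
    also have "\<dots> = dist (\<gamma>1 t) (\<gamma>0 t) + dist (g (\<gamma>0 t)) (\<gamma>2 t)" using giso by simp
    also have "dist (\<gamma>1 t) (\<gamma>0 t) \<le> dist (\<gamma>' t) (\<gamma>1 t) + dist (\<gamma>' t) (\<gamma>0 t)"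
      by (rule dist_triangle3)
    finally show "dist (g (\<gamma>1 t)) (\<gamma>2 t) \<le> C1 + C0 + C2" using C0 C1 C2 t by fastforce
  qed
  have E: "(\<lambda>n. rh \<epsilon> p (ys n) (g (xs n))) \<longlonglongrightarrow> 0"
    by (rule rays_equiv[OF eps st hx hy r2 close giso])
  have Geq: "G p ys h = G p (\<lambda>n. g (xs n)) h" for h
    by (rule G_equiv[OF eps st cy cgx E])
  have pw: "gromov p (g (xs n)) (g p) = dist p q - gromov p (xs n) q" for n
  proof -
    have "dist (g (xs n)) p = dist (xs n) q" "dist (g p) p = dist p q" "dist (g (xs n)) (g p) = dist (xs n) p"
      using giso gq by (metis)+
    then show ?thesis unfolding gromov_def by (simp add: dist_commute field_simps)
  qed
  have "(\<lambda>n. gromov p (g (xs n)) (g p)) \<longlonglongrightarrow> dist p q - G p xs q"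
    unfolding pw by (intro tendsto_intros G_tendsto[OF eps st cx])
  then have G2: "G p (\<lambda>n. g (xs n)) (g p) = dist p q - G p xs q"
    using G_tendsto[OF eps st cgx, of "g p"] LIMSEQ_unique by blast
  have "busemann p \<xi>' (g p) = dist (g p) p - 2 * G p ys (g p)"
    unfolding ys_def by (rule busemann_G[OF eps st cy[unfolded ys_def]])
  also have "\<dots> = dist p q - 2 * (dist p q - G p xs q)" using Geq G2 giso gq by metis
  finally show ?thesis unfolding q_def xs_def by simp
qed

lemma exp_diff_aux:
  fixes \<epsilon> a b D :: real
  assumes eps: "\<epsilon> > 0" and ab: "a \<le> b" and bD: "b \<le> D"
  shows "b - a \<le> exp (\<epsilon> * D) / \<epsilon> * (exp (- \<epsilon> * a) - exp (- \<epsilon> * b))"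
proof -
  define X where "X = exp (- \<epsilon> * a)"
  define Y where "Y = exp (- \<epsilon> * b)"
  define E where "E = exp (\<epsilon> * (b - a))"
  define u where "u = \<epsilon> * (b - a)"
  have u0: "u \<ge> 0" unfolding u_def using eps ab by simp
  have e: "- \<epsilon> * a = - \<epsilon> * b + \<epsilon> * (b - a)" by (simp add: algebra_simps)
  have XYE: "X = Y * E" unfolding X_def Y_def E_def by (metis e exp_add)
  have "E - 1 \<ge> u" unfolding E_def u_def using exp_ge_add_one_self[of "\<epsilon> * (b - a)"] by linarith
  then have "Y * u \<le> Y * (E - 1)" by (rule mult_left_mono) (simp add: Y_def)
  then have 1: "X - Y \<ge> Y * u" using XYE by (simp add: algebra_simps)
  have "exp (- \<epsilon> * D) \<le> Y" unfolding Y_def using mult_left_mono[OF bD, of \<epsilon>] eps by simp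
  then have "exp (- \<epsilon> * D) * u \<le> Y * u" using u0 by (rule mult_right_mono)
  then have 2: "exp (- \<epsilon> * D) * u \<le> X - Y" using 1 by linarith
  have "exp (\<epsilon> * D) * (exp (- \<epsilon> * D) * u) \<le> exp (\<epsilon> * D) * (X - Y)"
    using 2 by (rule mult_left_mono) simp
  moreover have "exp (\<epsilon> * D) * (exp (- \<epsilon> * D) * u) = u"
    by (simp add: exp_minus field_simps)
  ultimately have "u \<le> exp (\<epsilon> * D) * (X - Y)" by linarith
  then have "\<epsilon> * (b - a) \<le> exp (\<epsilon> * D) * (X - Y)" unfolding u_def .
  then show ?thesis unfolding X_def[symmetric] Y_def[symmetric] using eps by (simp add: field_simps)
qed

lemma exp_diff:
  fixes \<epsilon> a b D :: real
  assumes eps: "\<epsilon> > 0" and "a \<le> D" "b \<le> D"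
  shows "\<bar>a - b\<bar> \<le> exp (\<epsilon> * D) / \<epsilon> * \<bar>exp (- \<epsilon> * a) - exp (- \<epsilon> * b)\<bar>"
proof (cases "a \<le> b")
  case True
  have "exp (- \<epsilon> * a) \<ge> exp (- \<epsilon> * b)" using mult_left_mono[OF True, of \<epsilon>] eps by simp
  then show ?thesis using exp_diff_aux[OF eps True assms(3)] True by simp
next
  case False
  have "exp (- \<epsilon> * b) \<ge> exp (- \<epsilon> * a)" using mult_left_mono[of b a \<epsilon>] False eps by simp
  then show ?thesis using exp_diff_aux[OF eps _ assms(2), of b] False by simp
qed

theorem propositionA8:
  fixes T :: "'w::metric_space \<Rightarrow> 'w"
    and A :: "'w \<Rightarrow> 'h::metric_space \<Rightarrow> 'h"
    and \<alpha> :: "'w \<Rightarrow> (real \<Rightarrow> 'h) set"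
    and p :: 'h and \<epsilon> \<tau> :: real
  assumes compact_\<Omega>: "compact (UNIV :: 'w set)"
    and homeo: "\<exists>T'. homeomorphism UNIV UNIV T T'"
    and proper: "proper_space TYPE('h)"
    and unique_geod: "unique_geodesic_space TYPE('h)"
    and hyperbolic: "gromov_hyperbolic TYPE('h)"
    and visibility: "unique_visibility TYPE('h)"
    and eps: "\<epsilon> > 0"
    and strong: "strongly_hyperbolic \<epsilon> p"
    and isom: "\<And>\<omega>. isometry (A \<omega>)"
    and A_cont: "\<And>K \<omega>0 \<eta>. bounded K \<Longrightarrow> \<eta> > 0 \<Longrightarrow>
        \<exists>d>0. \<forall>\<omega>. dist \<omega> \<omega>0 < d \<longrightarrow> (\<forall>h\<in>K. dist (A \<omega> h) (A \<omega>0 h) < \<eta>)"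
    and \<alpha>_bd: "\<And>\<omega>. \<alpha> \<omega> \<in> gromov_boundary"
    and \<alpha>_cont: "\<And>\<omega>0 e. e > 0 \<Longrightarrow>
        \<exists>d>0. \<forall>\<omega>. dist \<omega> \<omega>0 < d \<longrightarrow> rho \<epsilon> p (\<alpha> \<omega>) (\<alpha> \<omega>0) < e"
    and equivariant: "\<And>\<omega>. bd_act (A \<omega>) (\<alpha> \<omega>) = \<alpha> (T \<omega>)"
    and tau: "0 < \<tau>" "\<tau> \<le> 1"
    and A_hoelder: "\<And>K. bounded K \<Longrightarrow>
        \<exists>C. \<forall>\<omega>1 \<omega>2. \<forall>h\<in>K. dist (A \<omega>1 h) (A \<omega>2 h) \<le> C * dist \<omega>1 \<omega>2 powr \<tau>"
    and \<alpha>_hoelder: "\<exists>C. \<forall>\<omega>1 \<omega>2. rho \<epsilon> p (\<alpha> \<omega>1) (\<alpha> \<omega>2) \<le> C * dist \<omega>1 \<omega>2 powr \<tau>"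
  shows "\<exists>C. \<forall>\<omega>1 \<omega>2.
      \<bar>(- busemann p (\<alpha> (T \<omega>1)) (A \<omega>1 p)) - (- busemann p (\<alpha> (T \<omega>2)) (A \<omega>2 p))\<bar>
        \<le> C * dist \<omega>1 \<omega>2 powr \<tau>"
proof -
  obtain C\<alpha> where C\<alpha>: "\<forall>\<omega>1 \<omega>2. rho \<epsilon> p (\<alpha> \<omega>1) (\<alpha> \<omega>2) \<le> C\<alpha> * dist \<omega>1 \<omega>2 powr \<tau>"
    using \<alpha>_hoelder by blast
  have "bounded {p}" by simp
  then obtain C0 where C0: "\<forall>\<omega>1 \<omega>2. \<forall>h\<in>{p}. dist (A \<omega>1 h) (A \<omega>2 h) \<le> C0 * dist \<omega>1 \<omega>2 powr \<tau>"
    using A_hoelder by blast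
  define \<omega>0 :: 'w where "\<omega>0 = undefined"
  obtain e\<Omega> where e\<Omega>: "\<forall>\<omega>. dist \<omega> \<omega>0 \<le> e\<Omega>"
    using compact_imp_bounded[OF compact_\<Omega>] unfolding bounded_any_center[where a = \<omega>0]
    by (metis UNIV_I dist_commute)
  define D where "D = \<bar>C0\<bar> * e\<Omega> powr \<tau> + dist (A \<omega>0 p) p"
  have Ap: "dist (A \<omega> p) p \<le> D" for \<omega>
  proof -
    have "dist (A \<omega> p) (A \<omega>0 p) \<le> C0 * dist \<omega> \<omega>0 powr \<tau>" by (metis C0 singletonI)
    also have "\<dots> \<le> \<bar>C0\<bar> * dist \<omega> \<omega>0 powr \<tau>" by (simp add: mult_right_mono)
    also have "\<dots> \<le> \<bar>C0\<bar> * e\<Omega> powr \<tau>"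
      using e\<Omega> tau by (intro mult_left_mono powr_mono2) auto
    finally show ?thesis unfolding D_def using dist_triangle[of "A \<omega> p" p "A \<omega>0 p"] by linarith
  qed
  define q where "q \<omega> = inv (A \<omega>) p" for \<omega>
  have giso: "dist (A \<omega> x) (A \<omega> y) = dist x y" for \<omega> x y using isom[of \<omega>] unfolding isometry_def by blast
  have Aq: "A \<omega> (q \<omega>) = p" for \<omega>
    unfolding q_def using isom[of \<omega>] unfolding isometry_def by (simp add: bij_is_surj surj_f_inv_f)
  have qD: "dist p (q \<omega>) \<le> D" for \<omega>
    using Ap[of \<omega>] giso[of \<omega> p "q \<omega>"] Aq[of \<omega>] by simp
  have bq: "bounded (range q)" unfolding bounded_any_center[where a = p] using qD by blast
  obtain CK where CK: "\<forall>\<omega>1 \<omega>2. \<forall>h\<in>range q. dist (A \<omega>1 h) (A \<omega>2 h) \<le> CK * dist \<omega>1 \<omega>2 powr \<tau>"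
    using A_hoelder[OF bq] by blast
  have qq: "dist (q \<omega>1) (q \<omega>2) \<le> CK * dist \<omega>1 \<omega>2 powr \<tau>" for \<omega>1 \<omega>2
  proof -
    have "dist (q \<omega>1) (q \<omega>2) = dist (A \<omega>2 (q \<omega>2)) (A \<omega>1 (q \<omega>2))"
      using giso[of \<omega>1 "q \<omega>1" "q \<omega>2"] Aq by (simp add: dist_commute)
    also have "\<dots> \<le> CK * dist \<omega>2 \<omega>1 powr \<tau>" using CK by blast
    finally show ?thesis by (simp add: dist_commute)
  qed
  define k where "k = 2 * (exp (\<epsilon> * D) / \<epsilon>)"
  have k: "k \<ge> 0" unfolding k_def using eps by simp
  have cauchy: "cauchy_rh \<epsilon> p (sq p (\<alpha> \<omega>))" for \<omega>
    by (rule conv_bd_cauchy[OF eps strong sq_conv[OF \<alpha>_bd]])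
  have phi: "- busemann p (\<alpha> (T \<omega>)) (A \<omega> p) = dist p (q \<omega>) - 2 * G p (sq p (\<alpha> \<omega>)) (q \<omega>)" for \<omega>
    unfolding q_def by (rule phi_formula[OF eps strong isom \<alpha>_bd \<alpha>_bd equivariant])
  show ?thesis
  proof (intro exI allI)
    fix \<omega>1 \<omega>2
    define x1 where "x1 = sq p (\<alpha> \<omega>1)"
    define x2 where "x2 = sq p (\<alpha> \<omega>2)"
    define q1 where "q1 = q \<omega>1"
    define q2 where "q2 = q \<omega>2"
    have c1: "cauchy_rh \<epsilon> p x1" and c2: "cauchy_rh \<epsilon> p x2" unfolding x1_def x2_def by (rule cauchy)+
    have a: "\<bar>dist p q1 - dist p q2\<bar> \<le> dist q1 q2"
      using dist_triangle[of p q1 q2] dist_triangle[of p q2 q1] dist_commute[of q2 q1] unfolding abs_le_iff by linarith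
    have b: "\<bar>G p x1 q1 - G p x1 q2\<bar> \<le> dist q1 q2" by (rule G_lip[OF eps strong c1])
    have "G p x1 q2 \<le> D" "G p x2 q2 \<le> D"
      using G_bounds(2)[OF eps strong c1, of q2] G_bounds(2)[OF eps strong c2, of q2] qD[of \<omega>2]
      unfolding q2_def by (simp_all add: dist_commute)
    then have c0: "\<bar>G p x1 q2 - G p x2 q2\<bar> \<le> exp (\<epsilon> * D) / \<epsilon> * \<bar>exp (- \<epsilon> * G p x1 q2) - exp (- \<epsilon> * G p x2 q2)\<bar>"
      by (rule exp_diff[OF eps])
    have c1: "\<bar>exp (- \<epsilon> * G p x1 q2) - exp (- \<epsilon> * G p x2 q2)\<bar> \<le> rho \<epsilon> p (\<alpha> \<omega>1) (\<alpha> \<omega>2)"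
      by (rule G_exp_bound[OF eps strong c1 c2]) (unfold x1_def x2_def, rule rho_lim[OF eps strong cauchy cauchy])
    have "0 \<le> exp (\<epsilon> * D) / \<epsilon>" using eps by simp
    from mult_left_mono[OF c1 this] have "exp (\<epsilon> * D) / \<epsilon> * \<bar>exp (- \<epsilon> * G p x1 q2) - exp (- \<epsilon> * G p x2 q2)\<bar>
       \<le> exp (\<epsilon> * D) / \<epsilon> * rho \<epsilon> p (\<alpha> \<omega>1) (\<alpha> \<omega>2)" .
    then have c: "\<bar>G p x1 q2 - G p x2 q2\<bar> \<le> exp (\<epsilon> * D) / \<epsilon> * rho \<epsilon> p (\<alpha> \<omega>1) (\<alpha> \<omega>2)"
      using c0 by linarith
    have "\<bar>(- busemann p (\<alpha> (T \<omega>1)) (A \<omega>1 p)) - (- busemann p (\<alpha> (T \<omega>2)) (A \<omega>2 p))\<bar>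
        = \<bar>(dist p q1 - dist p q2) - 2 * (G p x1 q1 - G p x1 q2) - 2 * (G p x1 q2 - G p x2 q2)\<bar>"
      unfolding phi x1_def x2_def q1_def q2_def by (simp add: algebra_simps)
    also have "\<dots> \<le> 3 * dist q1 q2 + k * rho \<epsilon> p (\<alpha> \<omega>1) (\<alpha> \<omega>2)"
      using a b c unfolding k_def by (simp add: abs_le_iff)
    also have "\<dots> \<le> 3 * (CK * dist \<omega>1 \<omega>2 powr \<tau>) + k * (C\<alpha> * dist \<omega>1 \<omega>2 powr \<tau>)"
      using qq[of \<omega>1 \<omega>2] C\<alpha> k unfolding q1_def q2_def
      by (intro add_mono mult_left_mono) auto
    also have "\<dots> = (3 * CK + k * C\<alpha>) * dist \<omega>1 \<omega>2 powr \<tau>" by (simp add: algebra_simps)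
    finally show "\<bar>(- busemann p (\<alpha> (T \<omega>1)) (A \<omega>1 p)) - (- busemann p (\<alpha> (T \<omega>2)) (A \<omega>2 p))\<bar>
        \<le> (3 * CK + k * C\<alpha>) * dist \<omega>1 \<omega>2 powr \<tau>" .
  qed
qed

end
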